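(* Let $\Lambda$ be a real interval, let $w_i\ge0$ with $\sum_iw_i=1$, and let $\psi$ be the weighted-proportional-cumulative with weights $\mathbf w$. Let $p_1,\dots,p_n\in\mathcal P$ have continuous CDFs $P_1,\dots,P_n$ with densities (also denoted $p_i$) and suppose $P_1\ge P_2\ge\dots\ge P_n$ pointwise. Writing $W_i=\sum_{k\le i}w_k$ ($W_0=0$), the output $\psi(\mathbf p)$ has density given (almost everywhere) by $$\psi(\mathbf p)(a)=\begin{cases}p_i(a)&\text{if }W_{i-1}\le P_i(a)<W_i\text{ for some }i\in N,\\ 0&\text{otherwise.}\end{cases}$$
   Context: $N=\{1,\dots,n\}$; $\mathcal P$ the Borel probability measures on $\Lambda$, $\mathcal C$ the CDFs, $\pi(p)(a)=p(\{x\in\Lambda:x\le a\})$. The weighted-proportional-cumulative with weights $\mathbf w$ is the PAF $\psi:\mathcal P^N\to\mathcal P$ whose associated CAF $\Psi$ (defined by $\Psi(\pi(p_1),\dots,\pi(p_n))=\pi(\psi(p_1,\dots,p_n))$) is $\Psi(\mathbf P)(a)=\mu_{\mathbf w}(P_1(a),\dots,P_n(a))$, where $\mu_{\mathbf w}(\mathbf r)=\sup\{y\in[0,1]:\sum_{i:\,r_i\ge y}w_i\ge y\}$. *)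

theory Defs
  imports "HOL-Probability.Probability"
begin

text \<open>Probability measures on the real interval Lambda are represented as probability
  measures on the Borel sets of the reals that are concentrated on Lambda.\<close>

definition prob_on :: "real set \<Rightarrow> real measure \<Rightarrow> bool" where
  "prob_on \<Lambda> p \<longleftrightarrow> prob_space p \<and> sets p = sets borel \<and> emeasure p (UNIV - \<Lambda>) = 0"

definition cdf_on :: "real set \<Rightarrow> real measure \<Rightarrow> real \<Rightarrow> real" where
  "cdf_on \<Lambda> p a = measure p {x \<in> \<Lambda>. x \<le> a}"

definition mu_w :: "nat \<Rightarrow> (nat \<Rightarrow> real) \<Rightarrow> (nat \<Rightarrow> real) \<Rightarrow> real" where
  "mu_w n w r = Sup {y \<in> {0..1}. (\<Sum>i\<in>{i\<in>{1..n}. r i \<ge> y}. w i) \<ge> y}"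

definition wpc :: "real set \<Rightarrow> nat \<Rightarrow> (nat \<Rightarrow> real) \<Rightarrow> (nat \<Rightarrow> real measure) \<Rightarrow> real measure" where
  "wpc \<Lambda> n w ps = (THE q. prob_on \<Lambda> q \<and>
      (\<forall>a\<in>\<Lambda>. cdf_on \<Lambda> q a = mu_w n w (\<lambda>i. cdf_on \<Lambda> (ps i) a)))"

end

theory Submission
  imports Defs
begin

lemma cdf_less_measure:
  assumes "real_distribution M" and na: "\<And>x. measure M {x} = 0"
  shows "measure M {x. cdf M x < u} = max 0 (min 1 u)"
proof -
  interpret real_distribution M by fact
  have cont: "isCont (cdf M) x" for x using isCont_cdf na by simp
  consider "u \<le> 0" | "u > 1" | "0 < u" "u \<le> 1" by linarith
  then show ?thesis
  proof cases
    case 1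
    then have "{x. cdf M x < u} = {}" proof safe
      fix x assume "cdf M x < u" then show "x \<in> {}" using cdf_nonneg[of x] 1 by linarith
    qed
    then show ?thesis using 1 by simp
  next
    case 2
    then have "{x. cdf M x < u} = UNIV" using cdf_bounded_prob by (auto intro: le_less_trans)
    then show ?thesis using 2 prob_space by simp
  next
    case 3
    define T where "T = {x. u \<le> cdf M x}"
    show ?thesis
    proof (cases "T = {}")
      case True
      then have all: "\<And>x. cdf M x < u" unfolding T_def by (auto simp: not_le)
      have "1 \<le> u"
        by (rule tendsto_upperbound[OF cdf_lim_at_top_prob]) (auto simp: all less_imp_le)
      then have "u = 1" using 3 by simp
      moreover have "{x. cdf M x < u} = UNIV" using all by auto
      ultimately show ?thesis using prob_space by simp
    next
      case False
      have cl: "closed T" unfolding T_def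
        by (rule closed_Collect_le) (auto intro: continuous_at_imp_continuous_on cont)
      have "eventually (\<lambda>x. cdf M x < u) at_bot"
        using order_tendstoD(2)[OF cdf_lim_at_bot] 3 by simp
      then obtain N where N: "\<And>x. x \<le> N \<Longrightarrow> cdf M x < u" by (auto simp: eventually_at_bot_linorder)
      have bdd: "bdd_below T" unfolding T_def bdd_below_def
      proof (rule exI[of _ N], safe)
        fix x assume "u \<le> cdf M x"
        then show "N \<le> x" using N[of x] by linarith
      qed
      define t where "t = Inf T"
      have tT: "t \<in> T" unfolding t_def using closed_contains_Inf[OF False bdd cl] .
      have eq: "{x. cdf M x < u} = {..<t}"
      proof safe
        fix x assume "cdf M x < u"
        then have "x \<notin> T" unfolding T_def by (auto simp: not_le)
        moreover have "t \<le> x \<Longrightarrow> x \<in> T" using tT cdf_nondecreasing unfolding T_def by (auto intro: order.trans)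
        ultimately show "x < t" by force
      next
        fix x assume "x < t"
        then have "x \<notin> T" unfolding t_def using cInf_lower[OF _ bdd] by force
        then show "cdf M x < u" unfolding T_def by (auto simp: not_le)
      qed
      have l1: "(cdf M \<longlongrightarrow> cdf M t) (at_left t)"
        using cont[of t] by (simp add: isCont_def filterlim_at_split)
      have ml: "measure M {..<t} = cdf M t"
        using tendsto_unique[OF trivial_limit_at_left_real cdf_at_left l1] .
      have "measure M {..<t} \<le> u"
      proof (rule tendsto_upperbound[OF cdf_at_left])
        have "\<forall>x\<in>{t - 1<..<t}. cdf M x \<le> u" proof
          fix x assume "x \<in> {t - 1<..<t}"
          then have "x \<in> {x. cdf M x < u}" unfolding eq by simp
          then show "cdf M x \<le> u" by simp
        qed
        then show "\<forall>\<^sub>F x in at_left t. cdf M x \<le> u"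
        proof -
          have "eventually (\<lambda>x. x \<in> {t - 1<..<t}) (at_left t)" by (rule eventually_at_left_real) simp
          then show ?thesis by (rule eventually_mono) (use \<open>\<forall>x\<in>{t - 1<..<t}. cdf M x \<le> u\<close> in auto)
        qed
      qed (simp add: trivial_limit_at_left_real)
      moreover have "u \<le> cdf M t" using tT unfolding T_def by simp
      ultimately have "measure M {x. cdf M x < u} = u" unfolding eq ml by simp
      then show ?thesis using 3 by simp
    qed
  qed
qed

lemma cdf_less_measure2:
  assumes rd: "real_distribution M" and na: "\<And>x. measure M {x} = 0"
  shows "measure M ({..a} \<inter> {x. cdf M x < u}) = min (cdf M a) (max 0 (min 1 u))"
proof -
  interpret real_distribution M by fact
  show ?thesis
  proof (cases "cdf M a < u")
    case True
    have "{..a} \<inter> {x. cdf M x < u} = {..a}"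
      using True cdf_nondecreasing by (auto intro: le_less_trans)
    then have "measure M ({..a} \<inter> {x. cdf M x < u}) = cdf M a" by (simp add: cdf_def2)
    then show ?thesis using True cdf_nonneg[of a] cdf_bounded_prob[of a] by (simp add: min_def max_def)
  next
    case False
    have "{..a} \<inter> {x. cdf M x < u} = {x. cdf M x < u}"
    proof safe
      fix x assume "cdf M x < u"
      show "x \<le> a"
      proof (rule ccontr)
        assume "\<not> x \<le> a"
        then have "cdf M a \<le> cdf M x" using cdf_nondecreasing by simp
        then show False using False \<open>cdf M x < u\<close> by simp
      qed
    qed
    then show ?thesis using cdf_less_measure[OF rd na, of u] False cdf_nonneg[of a] cdf_bounded_prob[of a]
      by simp
  qed
qed

lemma cdf_borel:
  assumes "real_distribution M"
  shows "cdf M \<in> borel_measurable borel"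
  by (rule borel_measurable_mono) (auto simp: mono_def finite_borel_measure.cdf_nondecreasing[OF real_distribution.finite_borel_measure_M[OF assms]])

lemma cdf_band_measure:
  assumes rd: "real_distribution M" and na: "\<And>x. measure M {x} = 0"
    and cd: "0 \<le> c" "c \<le> d" "d \<le> 1"
  shows "measure M ({..a} \<inter> {x. c \<le> cdf M x \<and> cdf M x < d}) = min (max (cdf M a) c) d - c"
proof -
  interpret real_distribution M by fact
  have cb[measurable]: "cdf M \<in> borel_measurable borel" by (rule cdf_borel[OF rd])
  have e: "{..a} \<inter> {x. c \<le> cdf M x \<and> cdf M x < d} = ({..a} \<inter> {x. cdf M x < d}) - ({..a} \<inter> {x. cdf M x < c})"
    by auto
  have m1: "{..a} \<inter> {x. cdf M x < d} \<in> sets M" by measurable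
  have m2: "{..a} \<inter> {x. cdf M x < c} \<in> sets M" by measurable
  have "measure M ({..a} \<inter> {x. c \<le> cdf M x \<and> cdf M x < d}) =
     measure M ({..a} \<inter> {x. cdf M x < d}) - measure M ({..a} \<inter> {x. cdf M x < c})"
    unfolding e using cd by (intro finite_measure_Diff m1 m2) auto
  also have "\<dots> = min (cdf M a) d - min (cdf M a) c"
    using cd by (simp add: cdf_less_measure2[OF rd na])
  also have "\<dots> = min (max (cdf M a) c) d - c"
    using cd cdf_nonneg[of a] by (auto simp: min_def max_def)
  finally show ?thesis .
qed

lemma cdf_band_measure_UNIV:
  assumes rd: "real_distribution M" and na: "\<And>x. measure M {x} = 0"
    and cd: "0 \<le> c" "c \<le> d" "d \<le> 1"
  shows "measure M {x. c \<le> cdf M x \<and> cdf M x < d} = d - c"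
proof -
  interpret real_distribution M by fact
  have cb[measurable]: "cdf M \<in> borel_measurable borel" by (rule cdf_borel[OF rd])
  have e: "{x. c \<le> cdf M x \<and> cdf M x < d} = {x. cdf M x < d} - {x. cdf M x < c}"
    by auto
  have m1: "{x. cdf M x < d} \<in> sets M" by measurable
  have m2: "{x. cdf M x < c} \<in> sets M" by measurable
  have "measure M {x. c \<le> cdf M x \<and> cdf M x < d} = measure M {x. cdf M x < d} - measure M {x. cdf M x < c}"
    unfolding e using cd by (intro finite_measure_Diff m1 m2) auto
  then show ?thesis using cd by (simp add: cdf_less_measure[OF rd na])
qed

lemma mu_w_clamp:
  fixes n :: nat and w r :: "nat \<Rightarrow> real"
  assumes w0: "\<And>i. i \<in> {1..n} \<Longrightarrow> w i \<ge> 0"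
    and w1: "(\<Sum>i\<in>{1..n}. w i) = 1"
    and r01: "\<And>i. i \<in> {1..n} \<Longrightarrow> 0 \<le> r i \<and> r i \<le> 1"
    and dec: "\<And>i j. i \<in> {1..n} \<Longrightarrow> j \<in> {1..n} \<Longrightarrow> i \<le> j \<Longrightarrow> r j \<le> r i"
  shows "mu_w n w r = (\<Sum>i\<in>{1..n}. min (max (r i) (\<Sum>k\<in>{1..<i}. w k)) (\<Sum>k\<in>{1..i}. w k) - (\<Sum>k\<in>{1..<i}. w k))"
proof -
  define W' where "W' i = (\<Sum>k\<in>{1..<i}. w k)" for i
  define W where "W i = (\<Sum>k\<in>{1..i}. w k)" for i
  define V where "V = (\<Sum>i\<in>{1..n}. min (max (r i) (W' i)) (W i) - W' i)"
  define S where "S = {y \<in> {0..1}. (\<Sum>i\<in>{i\<in>{1..n}. r i \<ge> y}. w i) \<ge> y}"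
  have smono: "sum w A \<le> sum w B" if "A \<subseteq> B" "B \<subseteq> {1..n}" for A B
    using that w0 by (intro sum_mono2) (auto intro: finite_subset)
  have WW': "W i \<le> W' j" if "i < j" "j \<le> n" for i j
    unfolding W_def W'_def using that by (intro smono) auto
  have W'W: "W' i \<le> W i" if "i \<le> n" for i
    unfolding W_def W'_def using that by (intro smono) auto
  have W'0: "0 \<le> W' i" if "i \<le> n" for i
    unfolding W'_def using that w0 by (intro sum_nonneg) auto
  have W1: "W i \<le> 1" if "i \<le> n" for i
    unfolding W_def using that w1 smono[of "{1..i}" "{1..n}"] by auto
  have Wn: "W n = 1" using w1 W_def by simp
  have n1: "n \<ge> 1" using w1 by (cases n) auto
  have "Sup S = V"
  proof (cases "\<exists>i\<in>{1..n}. r i > W' i")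
    case False
    have V0: "V = 0" unfolding V_def
    proof (rule sum.neutral, rule ballI)
      fix i assume i: "i \<in> {1..n}"
      then have "r i \<le> W' i" using False by force
      then show "min (max (r i) (W' i)) (W i) - W' i = 0" using W'W[of i] i by auto
    qed
    have "r 1 \<le> 0" using False n1 bspec[of _ _ 1] by (force simp: W'_def)
    then have rz: "r i = 0" if "i \<in> {1..n}" for i using dec[of 1 i] r01[of i] that n1 by force
    have "0 \<in> S" unfolding S_def using w0 by (auto intro!: sum_nonneg)
    moreover have "y \<le> 0" if "y \<in> S" for y
    proof (rule ccontr)
      assume "\<not> y \<le> 0"
      then have "{i\<in>{1..n}. r i \<ge> y} = {}" using rz by force
      then have "(\<Sum>i\<in>{i\<in>{1..n}. r i \<ge> y}. w i) = 0" by (simp only: sum.empty)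
      then show False using that \<open>\<not> y \<le> 0\<close> unfolding S_def by auto
    qed
    ultimately show ?thesis unfolding V0 by (intro cSup_eq_maximum) auto
  next
    case True
    define J where "J = {i\<in>{1..n}. r i > W' i}"
    define m where "m = Max J"
    have J: "finite J" "J \<noteq> {}" using True J_def by auto
    have mJ: "m \<in> J" unfolding m_def using J by simp
    then have m: "1 \<le> m" "m \<le> n" "r m > W' m" unfolding J_def by auto
    have after: "r i \<le> W' i" if "i \<in> {1..n}" "m < i" for i
    proof (rule ccontr)
      assume "\<not> r i \<le> W' i"
      then have "i \<in> J" using that unfolding J_def by auto
      then show False using that Max_ge[OF J(1), of i] m_def by auto
    qed
    have before: "r i \<ge> W i" if "i \<in> {1..n}" "i < m" for i
      using dec[of i m] that m WW'[of i m] by auto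
    have trm: "min (max (r i) (W' i)) (W i) - W' i =
        (if i \<in> {..<m} then w i else 0) + (if i = m then min (r m) (W m) - W' m else 0)"
      if i: "i \<in> {1..n}" for i
    proof -
      consider "i < m" | "i = m" | "m < i" by linarith
      then show ?thesis
      proof cases
        case 1
        then have "W i = W' i + w i" using i by (simp add: W_def W'_def atLeastLessThanSuc_atLeastAtMost[symmetric])
        then show ?thesis using 1 before[OF i 1] W'W[of i] i by auto
      next
        case 2 then show ?thesis using m by auto
      next
        case 3 then show ?thesis using after[OF i 3] W'W[of i] i by auto
      qed
    qed
    have "V = (\<Sum>i\<in>{1..n}. (if i \<in> {..<m} then w i else 0)) + (\<Sum>i\<in>{1..n}. (if i = m then min (r m) (W m) - W' m else 0))"
      unfolding V_def sum.distrib[symmetric] by (rule sum.cong[OF refl trm])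
    also have "(\<Sum>i\<in>{1..n}. (if i \<in> {..<m} then w i else 0)) = sum w ({1..n} \<inter> {..<m})"
      by (simp add: sum.inter_restrict)
    also have "{1..n} \<inter> {..<m} = {1..<m}" using m by auto
    also have "(\<Sum>i\<in>{1..n}. (if i = m then min (r m) (W m) - W' m else 0)) = min (r m) (W m) - W' m"
      using m by simp
    finally have VV: "V = min (r m) (W m)" unfolding W'_def by simp
    have "V \<in> S"
    proof -
      have "{1..m} \<subseteq> {i\<in>{1..n}. r i \<ge> V}" using m dec[of _ m] VV by force
      then have "W m \<le> (\<Sum>i\<in>{i\<in>{1..n}. r i \<ge> V}. w i)" unfolding W_def by (intro smono) auto
      moreover have "0 \<le> V" "V \<le> 1" using VV r01[of m] m W'0[of m] W'W[of m] W1[of m] by auto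
      ultimately show ?thesis unfolding S_def using VV by auto
    qed
    moreover have "y \<le> V" if y: "y \<in> S" for y
    proof (rule ccontr)
      assume yV: "\<not> y \<le> V"
      define K where "K = {i\<in>{1..n}. r i \<ge> y}"
      have Ky: "y \<le> sum w K" using y unfolding S_def K_def by auto
      have Km: "K \<subseteq> {1..m}"
      proof
        fix i assume iK: "i \<in> K"
        show "i \<in> {1..m}"
        proof (rule ccontr)
          assume "i \<notin> {1..m}"
          then have im: "m < i" "i \<le> n" "1 \<le> i" using iK K_def by auto
          then have m1: "Suc m \<in> {1..n}" by auto
          have "r (Suc m) \<le> W' (Suc m)" using after[OF m1] by simp
          moreover have "W' (Suc m) = W m" unfolding W'_def W_def by (simp add: atLeastLessThanSuc_atLeastAtMost)
          moreover have "r (Suc m) \<le> r m" using dec[of m "Suc m"] m m1 by auto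
          moreover have "r i \<le> r (Suc m)" using dec[of "Suc m" i] m1 im by auto
          ultimately have "r i \<le> V" using VV by auto
          then show False using yV iK K_def by auto
        qed
      qed
      show False
      proof (cases "r m \<ge> W m")
        case True
        then have "sum w K \<le> W m" unfolding W_def using Km by (intro smono) (use m in auto)
        then show False using Ky yV VV True by auto
      next
        case False
        then have "m \<notin> K" using VV yV K_def by auto
        then have "K \<subseteq> {1..<m}" using Km by (auto simp: subset_iff) (metis atLeastAtMost_iff le_neq_implies_less)
        then have "sum w K \<le> W' m" unfolding W'_def by (intro smono) (use m in auto)
        then show False using Ky yV VV False m by auto
      qed
    qed
    ultimately show ?thesis by (intro cSup_eq_maximum) auto
  qed
  then show ?thesis unfolding mu_w_def S_def V_def W_def W'_def .
qed

lemma prob_on_rd: "prob_on \<Lambda> q \<Longrightarrow> real_distribution q"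
  unfolding prob_on_def by (simp add: real_distribution_def real_distribution_axioms_def)

lemma prob_on_restrict:
  assumes "prob_on \<Lambda> q" "is_interval \<Lambda>" "A \<in> sets borel"
  shows "measure q (A \<inter> \<Lambda>) = measure q A"
proof -
  have L: "\<Lambda> \<in> sets borel" using assms(2) by (rule real_interval_borel_measurable)
  have N: "UNIV - \<Lambda> \<in> null_sets q" using assms(1) L unfolding prob_on_def by auto
  have "A \<inter> \<Lambda> = A - (UNIV - \<Lambda>)" by auto
  then show ?thesis using emeasure_Diff_null_set[OF N, of A] assms(1,3) unfolding prob_on_def measure_def
    by simp
qed

lemma cdf_on_eq:
  assumes "prob_on \<Lambda> q" "is_interval \<Lambda>"
  shows "cdf_on \<Lambda> q a = cdf q a"
proof -
  have "{x \<in> \<Lambda>. x \<le> a} = {..a} \<inter> \<Lambda>" by auto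
  then show ?thesis unfolding cdf_on_def cdf_def using prob_on_restrict[OF assms, of "{..a}"] by simp
qed

lemma cdf_outside:
  assumes "prob_on \<Lambda> q" "is_interval \<Lambda>" "a \<notin> \<Lambda>"
  shows "cdf q a = (if \<forall>x\<in>\<Lambda>. a < x then 0 else 1)"
proof (cases "\<forall>x\<in>\<Lambda>. a < x")
  case True
  then have "{..a} \<inter> \<Lambda> = {}" by (auto simp: not_le)
  then show ?thesis using True prob_on_restrict[OF assms(1,2), of "{..a}"] unfolding cdf_def by simp
next
  case False
  then obtain x where x: "x \<in> \<Lambda>" "x \<le> a" by (auto simp: not_less)
  have "\<Lambda> \<subseteq> {..a}"
  proof
    fix y assume y: "y \<in> \<Lambda>"
    show "y \<in> {..a}"
    proof (rule ccontr)
      assume "y \<notin> {..a}"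
      then have ay: "a \<le> y" by simp
      have iv: "\<forall>u\<in>\<Lambda>. \<forall>v\<in>\<Lambda>. \<forall>z. u \<le> z \<and> z \<le> v \<longrightarrow> z \<in> \<Lambda>"
        using assms(2) unfolding is_interval_1 .
      have "a \<in> \<Lambda>" using iv x(1) y x(2) ay by blast
      then show False using assms(3) by simp
    qed
  qed
  then have "{..a} \<inter> \<Lambda> = UNIV \<inter> \<Lambda>" by auto
  then have "measure q {..a} = measure q UNIV"
    using prob_on_restrict[OF assms(1,2), of "{..a}"] prob_on_restrict[OF assms(1,2), of UNIV] by simp
  moreover have "measure q UNIV = 1" using assms(1) unfolding prob_on_def
    by (metis prob_space.prob_space sets_eq_imp_space_eq space_borel)
  ultimately show ?thesis using False unfolding cdf_def by simp
qed

theorem mainTheorem13: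
  fixes \<Lambda> :: "real set" and n :: nat and w :: "nat \<Rightarrow> real"
    and ps :: "nat \<Rightarrow> real measure" and f :: "nat \<Rightarrow> real \<Rightarrow> real"
  assumes "is_interval \<Lambda>"
    and "\<And>i. i \<in> {1..n} \<Longrightarrow> w i \<ge> 0"
    and "(\<Sum>i\<in>{1..n}. w i) = 1"
    and "\<And>i. i \<in> {1..n} \<Longrightarrow> prob_on \<Lambda> (ps i)"
    and "\<And>i. i \<in> {1..n} \<Longrightarrow> continuous_on \<Lambda> (cdf_on \<Lambda> (ps i))"
    and "\<And>i. i \<in> {1..n} \<Longrightarrow> f i \<in> borel_measurable borel"
    and "\<And>i x. i \<in> {1..n} \<Longrightarrow> f i x \<ge> 0"
    and "\<And>i. i \<in> {1..n} \<Longrightarrow> ps i = density lborel (\<lambda>x. ennreal (f i x))"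
    and "\<And>i j a. i \<in> {1..n} \<Longrightarrow> j \<in> {1..n} \<Longrightarrow> i \<le> j \<Longrightarrow> a \<in> \<Lambda> \<Longrightarrow>
           cdf_on \<Lambda> (ps i) a \<ge> cdf_on \<Lambda> (ps j) a"
  shows "wpc \<Lambda> n w ps = density lborel (\<lambda>a. ennreal
           (if \<exists>i\<in>{1..n}. (\<Sum>k\<in>{1..<i}. w k) \<le> cdf_on \<Lambda> (ps i) a
                           \<and> cdf_on \<Lambda> (ps i) a < (\<Sum>k\<in>{1..i}. w k)
            then f (THE i. i \<in> {1..n} \<and> (\<Sum>k\<in>{1..<i}. w k) \<le> cdf_on \<Lambda> (ps i) a
                           \<and> cdf_on \<Lambda> (ps i) a < (\<Sum>k\<in>{1..i}. w k)) a
            else 0))"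
proof -
  note iv = assms(1) and w0 = assms(2) and w1 = assms(3) and po = assms(4)
    and fm = assms(6) and f0 = assms(7) and psd = assms(8) and dec = assms(9)
  define I where "I = {1..n}"
  have rd: "real_distribution (ps i)" if "i \<in> I" for i using po that prob_on_rd I_def by auto
  have na: "measure (ps i) {x} = 0" if i: "i \<in> I" for i x
  proof -
    have [measurable]: "f i \<in> borel_measurable borel" using fm i I_def by auto
    have "emeasure (ps i) {x} = (\<integral>\<^sup>+ y. ennreal (f i y) * indicator {x} y \<partial>lborel)"
      using psd[of i] i I_def by (simp add: emeasure_density)
    also have "\<dots> = 0" by (rule nn_integral_null_set) (simp add: finite_imp_null_set_lborel)
    finally show ?thesis by (simp add: measure_def)
  qed
  have Feq: "cdf_on \<Lambda> (ps i) = cdf (ps i)" if "i \<in> I" for i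
    using cdf_on_eq[OF po iv] that I_def by auto
  have mono_all: "cdf (ps j) x \<le> cdf (ps i) x" if "i \<in> I" "j \<in> I" "i \<le> j" for i j x
  proof (cases "x \<in> \<Lambda>")
    case True then show ?thesis using dec[of i j x] that Feq I_def by auto
  next
    case False then show ?thesis using cdf_outside[OF po iv False] that I_def by auto
  qed
  have F01: "0 \<le> cdf (ps i) x \<and> cdf (ps i) x \<le> 1" if "i \<in> I" for i x
    using finite_borel_measure.cdf_nonneg[OF real_distribution.finite_borel_measure_M[OF rd]]
      real_distribution.cdf_bounded_prob[OF rd] that by auto
  define W' where "W' i = (\<Sum>k\<in>{1..<i}. w k)" for i
  define W where "W i = (\<Sum>k\<in>{1..i}. w k)" for i
  have smono: "sum w A \<le> sum w B" if "A \<subseteq> B" "B \<subseteq> {1..n}" for A B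
    using that w0 by (intro sum_mono2) (auto intro: finite_subset)
  have WW': "W i \<le> W' j" if "i < j" "j \<le> n" for i j
    unfolding W_def W'_def using that by (intro smono) auto
  have W'W: "W' i \<le> W i" if "i \<le> n" for i
    unfolding W_def W'_def using that by (intro smono) auto
  have W'0: "0 \<le> W' i" if "i \<le> n" for i
    unfolding W'_def using that w0 by (intro sum_nonneg) auto
  have W1: "W i \<le> 1" if "i \<le> n" for i
    unfolding W_def using that w1 smono[of "{1..i}" "{1..n}"] by auto
  have Ww: "W i - W' i = w i" if "1 \<le> i" for i
    using that by (simp add: W_def W'_def atLeastLessThanSuc_atLeastAtMost[symmetric])
  define S where "S i = {x. W' i \<le> cdf (ps i) x \<and> cdf (ps i) x < W i}" for i
  have Sm[measurable]: "S i \<in> sets borel" if "i \<in> I" for i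
  proof -
    have [measurable]: "cdf (ps i) \<in> borel_measurable borel" using cdf_borel[OF rd[OF that]] .
    show ?thesis unfolding S_def by measurable
  qed
  have uniq: "i = j" if "i \<in> I" "j \<in> I" "x \<in> S i" "x \<in> S j" for i j x
  proof -
    have *: False if "i \<in> I" "j \<in> I" "x \<in> S i" "x \<in> S j" "i < j" for i j
    proof -
      have "W i \<le> W' j" using WW' that I_def by auto
      moreover have "cdf (ps j) x \<le> cdf (ps i) x" using mono_all that by auto
      ultimately show False using that unfolding S_def by auto
    qed
    show ?thesis using *[of i j] *[of j i] that by (cases i j rule: linorder_cases) auto
  qed
  define h where "h x = (\<Sum>i\<in>I. f i x * indicator (S i) x)" for x
  have geq: "(\<lambda>a. ennreal
           (if \<exists>i\<in>{1..n}. (\<Sum>k\<in>{1..<i}. w k) \<le> cdf_on \<Lambda> (ps i) a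
                           \<and> cdf_on \<Lambda> (ps i) a < (\<Sum>k\<in>{1..i}. w k)
            then f (THE i. i \<in> {1..n} \<and> (\<Sum>k\<in>{1..<i}. w k) \<le> cdf_on \<Lambda> (ps i) a
                           \<and> cdf_on \<Lambda> (ps i) a < (\<Sum>k\<in>{1..i}. w k)) a
            else 0)) = (\<lambda>a. ennreal (h a))"
  proof (rule ext)
    fix a
    have cond: "(i \<in> {1..n} \<and> (\<Sum>k\<in>{1..<i}. w k) \<le> cdf_on \<Lambda> (ps i) a
                           \<and> cdf_on \<Lambda> (ps i) a < (\<Sum>k\<in>{1..i}. w k)) \<longleftrightarrow> i \<in> I \<and> a \<in> S i" for i
      using Feq unfolding I_def S_def W_def W'_def by auto
    show "ennreal (if \<exists>i\<in>{1..n}. (\<Sum>k\<in>{1..<i}. w k) \<le> cdf_on \<Lambda> (ps i) a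
                           \<and> cdf_on \<Lambda> (ps i) a < (\<Sum>k\<in>{1..i}. w k)
            then f (THE i. i \<in> {1..n} \<and> (\<Sum>k\<in>{1..<i}. w k) \<le> cdf_on \<Lambda> (ps i) a
                           \<and> cdf_on \<Lambda> (ps i) a < (\<Sum>k\<in>{1..i}. w k)) a
            else 0) = ennreal (h a)"
    proof (cases "\<exists>i\<in>I. a \<in> S i")
      case True
      then obtain i0 where i0: "i0 \<in> I" "a \<in> S i0" by auto
      have ex: "\<exists>i\<in>{1..n}. (\<Sum>k\<in>{1..<i}. w k) \<le> cdf_on \<Lambda> (ps i) a
                           \<and> cdf_on \<Lambda> (ps i) a < (\<Sum>k\<in>{1..i}. w k)"
        using cond[of i0] i0 by blast
      have th: "(THE i. i \<in> {1..n} \<and> (\<Sum>k\<in>{1..<i}. w k) \<le> cdf_on \<Lambda> (ps i) a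
                           \<and> cdf_on \<Lambda> (ps i) a < (\<Sum>k\<in>{1..i}. w k)) = i0"
        unfolding cond using i0 uniq by blast
      have "h a = (\<Sum>i\<in>I. if i = i0 then f i0 a else 0)"
        unfolding h_def using i0 uniq by (intro sum.cong) (auto simp: indicator_def)
      also have "\<dots> = f i0 a" using i0 I_def by simp
      finally show ?thesis by (subst if_P[OF ex], subst th) simp
    next
      case False
      have nex: "\<not> (\<exists>i\<in>{1..n}. (\<Sum>k\<in>{1..<i}. w k) \<le> cdf_on \<Lambda> (ps i) a
                           \<and> cdf_on \<Lambda> (ps i) a < (\<Sum>k\<in>{1..i}. w k))"
        using cond False by blast
      have "h a = 0" unfolding h_def using False by (intro sum.neutral) (auto simp: indicator_def)
      then show ?thesis by (subst if_not_P[OF nex]) simp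
    qed
  qed
  define Q where "Q = density lborel (\<lambda>a. ennreal (h a))"
  have hm[measurable]: "h \<in> borel_measurable borel"
    unfolding h_def using fm I_def by (intro borel_measurable_sum borel_measurable_times) auto
  have emQ: "emeasure Q A = (\<Sum>i\<in>I. emeasure (ps i) (A \<inter> S i))" if A[measurable]: "A \<in> sets borel" for A
  proof -
    have "emeasure Q A = (\<integral>\<^sup>+ x. ennreal (h x) * indicator A x \<partial>lborel)"
      unfolding Q_def by (simp add: emeasure_density)
    also have "\<dots> = (\<integral>\<^sup>+ x. (\<Sum>i\<in>I. ennreal (f i x) * indicator (A \<inter> S i) x) \<partial>lborel)"
    proof (rule nn_integral_cong)
      fix x
      have "ennreal (h x) = (\<Sum>i\<in>I. ennreal (f i x * indicator (S i) x))"
        unfolding h_def using f0 I_def by (subst sum_ennreal) auto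
      then show "ennreal (h x) * indicator A x = (\<Sum>i\<in>I. ennreal (f i x) * indicator (A \<inter> S i) x)"
        by (auto simp: sum_distrib_right indicator_def intro!: sum.cong)
    qed
    also have "\<dots> = (\<Sum>i\<in>I. (\<integral>\<^sup>+ x. ennreal (f i x) * indicator (A \<inter> S i) x \<partial>lborel))"
      using fm I_def Sm by (intro nn_integral_sum) auto
    also have "\<dots> = (\<Sum>i\<in>I. emeasure (ps i) (A \<inter> S i))"
    proof (rule sum.cong[OF refl])
      fix i assume i: "i \<in> I"
      have [measurable]: "f i \<in> borel_measurable borel" "S i \<in> sets borel" using fm i I_def Sm by auto
      show "(\<integral>\<^sup>+ x. ennreal (f i x) * indicator (A \<inter> S i) x \<partial>lborel) = emeasure (ps i) (A \<inter> S i)"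
        using psd[of i] i I_def by (simp add: emeasure_density)
    qed
    finally show ?thesis .
  qed
  have emps: "emeasure (ps i) B = ennreal (measure (ps i) B)" if "i \<in> I" for i B
    using rd[OF that] by (simp add: real_distribution_def prob_space_def finite_measure.emeasure_eq_measure)
  have QU: "emeasure Q UNIV = 1"
  proof -
    have "emeasure Q UNIV = (\<Sum>i\<in>I. ennreal (w i))"
    proof -
      have "emeasure Q UNIV = (\<Sum>i\<in>I. emeasure (ps i) (S i))" using emQ[of UNIV] by simp
      also have "\<dots> = (\<Sum>i\<in>I. ennreal (w i))"
      proof (rule sum.cong[OF refl])
        fix i assume i: "i \<in> I"
        have "measure (ps i) (S i) = W i - W' i" unfolding S_def
          using i I_def by (intro cdf_band_measure_UNIV[OF rd[OF i] na[OF i]] W'0 W'W W1) auto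
        then show "emeasure (ps i) (S i) = ennreal (w i)" using emps[OF i] Ww i I_def by simp
      qed
      finally show ?thesis .
    qed
    also have "\<dots> = ennreal 1" using w0 w1 I_def by (subst sum_ennreal) auto
    finally show ?thesis by simp
  qed
  have QL: "emeasure Q (UNIV - \<Lambda>) = 0"
  proof -
    have L: "\<Lambda> \<in> sets borel" using iv by (rule real_interval_borel_measurable)
    have "emeasure Q (UNIV - \<Lambda>) = (\<Sum>i\<in>I. emeasure (ps i) ((UNIV - \<Lambda>) \<inter> S i))" using emQ L by auto
    also have "\<dots> = 0"
    proof (rule sum.neutral, rule ballI)
      fix i assume i: "i \<in> I"
      have "emeasure (ps i) ((UNIV - \<Lambda>) \<inter> S i) \<le> emeasure (ps i) (UNIV - \<Lambda>)"
        by (rule emeasure_mono) (use po i I_def L in \<open>auto simp: prob_on_def\<close>)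
      then show "emeasure (ps i) ((UNIV - \<Lambda>) \<inter> S i) = 0" using po i I_def by (simp add: prob_on_def)
    qed
    finally show ?thesis .
  qed
  have sQ: "sets Q = sets borel" unfolding Q_def by simp
  have pQ: "prob_on \<Lambda> Q"
    unfolding prob_on_def using QU QL sQ by (auto intro!: prob_spaceI simp: Q_def)
  have QC: "cdf_on \<Lambda> Q a = mu_w n w (\<lambda>i. cdf_on \<Lambda> (ps i) a)" for a
  proof -
    define r where "r i = cdf_on \<Lambda> (ps i) a" for i
    have rr: "r i = cdf (ps i) a" if "i \<in> I" for i using Feq that r_def by simp
    have mu: "mu_w n w r = (\<Sum>i\<in>I. min (max (r i) (W' i)) (W i) - W' i)"
      unfolding W_def W'_def I_def
      by (rule mu_w_clamp) (use w0 w1 F01 rr mono_all I_def in auto)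
    have "emeasure Q {..a} = (\<Sum>i\<in>I. ennreal (min (max (r i) (W' i)) (W i) - W' i))"
    proof -
      have "emeasure Q {..a} = (\<Sum>i\<in>I. emeasure (ps i) ({..a} \<inter> S i))" using emQ by simp
      also have "\<dots> = (\<Sum>i\<in>I. ennreal (min (max (r i) (W' i)) (W i) - W' i))"
      proof (rule sum.cong[OF refl])
        fix i assume i: "i \<in> I"
        have "measure (ps i) ({..a} \<inter> S i) = min (max (cdf (ps i) a) (W' i)) (W i) - W' i" unfolding S_def
          using i I_def by (intro cdf_band_measure[OF rd[OF i] na[OF i]] W'0 W'W W1) auto
        then show "emeasure (ps i) ({..a} \<inter> S i) = ennreal (min (max (r i) (W' i)) (W i) - W' i)"
          using emps[OF i] rr[OF i] by simp
      qed
      finally show ?thesis .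
    qed
    also have "\<dots> = ennreal (mu_w n w r)" unfolding mu
      using W'W I_def by (subst sum_ennreal) auto
    finally have e: "emeasure Q {..a} = ennreal (mu_w n w r)" .
    have "0 \<le> mu_w n w r" unfolding mu using W'W I_def by (intro sum_nonneg) auto
    then have "measure Q {..a} = mu_w n w r" using e by (simp add: measure_def)
    moreover have "r = (\<lambda>i. cdf_on \<Lambda> (ps i) a)" using r_def by (simp add: fun_eq_iff)
    ultimately show ?thesis using cdf_on_eq[OF pQ iv] by (simp add: cdf_def)
  qed
  have "wpc \<Lambda> n w ps = Q"
    unfolding wpc_def
  proof (rule the_equality)
    show "prob_on \<Lambda> Q \<and> (\<forall>a\<in>\<Lambda>. cdf_on \<Lambda> Q a = mu_w n w (\<lambda>i. cdf_on \<Lambda> (ps i) a))"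
      using pQ QC by auto
  next
    fix q assume q: "prob_on \<Lambda> q \<and> (\<forall>a\<in>\<Lambda>. cdf_on \<Lambda> q a = mu_w n w (\<lambda>i. cdf_on \<Lambda> (ps i) a))"
    show "q = Q"
    proof (rule cdf_unique[OF prob_on_rd prob_on_rd])
      show "prob_on \<Lambda> q" "prob_on \<Lambda> Q" using q pQ by auto
      show "cdf q = cdf Q"
      proof
        fix a show "cdf q a = cdf Q a"
        proof (cases "a \<in> \<Lambda>")
          case True
          then show ?thesis using q QC cdf_on_eq[OF pQ iv] cdf_on_eq[of \<Lambda> q] iv by metis
        next
          case False
          then show ?thesis using cdf_outside[OF pQ iv False] cdf_outside[of \<Lambda> q] q iv by metis
        qed
      qed
    qed
  qed
  then show ?thesis unfolding geq Q_def .
qed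

end
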